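(* Let the universe be $\mathbb{Z}$ and let $\mathcal{C}$ be the collection consisting of the languages $\{1,2,\ldots,100\}\cup\mathbb{Z}_{\ge i}$ for all $i\in\mathbb{Z}$, where $\mathbb{Z}_{\ge i}=\{i,i+1,i+2,\ldots\}$. There is no algorithm that non-uniformly generates from $\mathcal{C}$ and whose generation times form a Pareto-optimal sequence.
   Context: Index the languages of $\mathcal{C}$ as $L_1,L_2,\ldots$ by any enumeration without repetition. An enumeration of a language $L$ is a sequence $x_1,x_2,\ldots$ with every $x_t\in L$ and every $x\in L$ equal to some $x_t$. A generating algorithm at each time $t\ge1$ receives $x_1,\ldots,x_t$ and outputs $z_t$; $S_t$ is the set of distinct strings among $x_1,\ldots,x_t$. An algorithm $\mathcal{G}$ non-uniformly generates from $\mathcal{C}$ if for every $i$ there is a finite $t(L_i)$ such that for every enumeration of $L_i$, $z_t\in L_i\setminus S_t$ whenever $|S_t|\ge t(L_i)$; its generation time $t_{\mathcal{G}}(L_i)$ is the least such value ($\infty$ if none). A sequence $t(L_1),t(L_2),\ldots$ is Pareto-optimal if every algorithm $\mathcal{G}$ that non-uniformly generates from $\mathcal{C}$ and satisfies $t_{\mathcal{G}}(L_i)<t(L_i)$ for some $i$ also satisfies $t_{\mathcal{G}}(L_j)>t(L_j)$ for some other $j$. *)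

theory Defs
  imports Main "HOL-Library.Extended_Nat"
begin

text \<open>An algorithm maps the finite prefix x_1,...,x_t (a list of length t) to its output z_t.
  A sequence x (indexed from 0, so x_t of the paper is x (t-1)) enumerates L iff its range is L.\<close>

definition enumerates :: "(nat \<Rightarrow> 'a) \<Rightarrow> 'a set \<Rightarrow> bool" where
  "enumerates x L \<longleftrightarrow> range x = L"

definition prefix :: "(nat \<Rightarrow> 'a) \<Rightarrow> nat \<Rightarrow> 'a list" where
  "prefix x t = map x [0..<t]"

definition gen_bound :: "('a list \<Rightarrow> 'a) \<Rightarrow> 'a set \<Rightarrow> nat \<Rightarrow> bool" where
  "gen_bound G L n \<longleftrightarrow>
     (\<forall>x. enumerates x L \<longrightarrow>
        (\<forall>t\<ge>1. card (set (prefix x t)) \<ge> n \<longrightarrow>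
           G (prefix x t) \<in> L - set (prefix x t)))"

definition gen_time :: "('a list \<Rightarrow> 'a) \<Rightarrow> 'a set \<Rightarrow> enat" where
  "gen_time G L = (if \<exists>n. gen_bound G L n then enat (LEAST n. gen_bound G L n) else \<infinity>)"

definition nonuniform_generates :: "'a set set \<Rightarrow> ('a list \<Rightarrow> 'a) \<Rightarrow> bool" where
  "nonuniform_generates C G \<longleftrightarrow> (\<forall>L\<in>C. gen_time G L \<noteq> \<infinity>)"

definition pareto_optimal :: "'a set set \<Rightarrow> ('a set \<Rightarrow> enat) \<Rightarrow> bool" where
  "pareto_optimal C tt \<longleftrightarrow>
     (\<forall>G. nonuniform_generates C G \<and> (\<exists>L\<in>C. gen_time G L < tt L)
          \<longrightarrow> (\<exists>L'\<in>C. gen_time G L' > tt L'))"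

definition C5 :: "int set set" where
  "C5 = range (\<lambda>i::int. {1..100} \<union> {i..})"

end

theory Submission
  imports Defs "HOL-Library.Countable_Set"
begin

declare upt_rec_numeral[simp del]

definition Aset :: "int \<Rightarrow> int set \<Rightarrow> int" where
  "Aset w S = (if S \<subseteq> {1..100} then (if {1..100} \<subseteq> S then w else Min ({1..100} - S)) else Max S + 1)"

lemma Aset_ok:
  assumes fin: "finite S" and sub: "S \<subseteq> {1..100} \<union> {i..}"
    and c: "card S \<ge> 101 \<or> (i \<le> w \<and> w \<ge> 101)"
  shows "Aset w S \<in> ({1..100} \<union> {i..}) - S"
proof (cases "S \<subseteq> {1..100}")
  case True
  show ?thesis
  proof (cases "{1..100} \<subseteq> S")
    case True2: True
    have "S = {1..100}" using True True2 by auto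
    hence "card S = 100" by simp
    with c have "i \<le> w \<and> w \<ge> 101" by auto
    moreover have eq: "Aset w S = w" using True True2 by (simp add: Aset_def)
    ultimately show ?thesis using \<open>S = {1..100}\<close> by auto
  next
    case False
    hence ne: "{1..100} - S \<noteq> {}" by auto
    have m: "Min ({1..100} - S) \<in> {1..100} - S" using ne by (intro Min_in) auto
    have eq: "Aset w S = Min ({1..100} - S)" using True False by (simp add: Aset_def)
    show ?thesis unfolding eq using m by blast
  qed
next
  case False
  then obtain s where s: "s \<in> S" "s \<notin> {1..100}" by blast
  have "s \<ge> i" using s sub by auto
  have "s \<le> Max S" using s fin by simp
  moreover have "Max S + 1 \<notin> S"
  proof
    assume "Max S + 1 \<in> S" hence "Max S + 1 \<le> Max S" by (rule Max_ge[OF fin])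
    thus False by simp
  qed
  moreover have eq: "Aset w S = Max S + 1" using False by (simp add: Aset_def)
  ultimately show ?thesis using \<open>s \<ge> i\<close> unfolding eq by auto
qed

lemma gen_time_le: "gen_bound G L n \<Longrightarrow> gen_time G L \<le> enat n"
  unfolding gen_time_def by (auto intro: Least_le)

lemma gen_time_ge: "(\<And>n. n < m \<Longrightarrow> \<not> gen_bound G L n) \<Longrightarrow> gen_time G L \<ge> enat m"
  unfolding gen_time_def
  by (auto intro: LeastI2 simp: not_less[symmetric])

lemma prefix_sub: "enumerates x L \<Longrightarrow> set (prefix x t) \<subseteq> L"
  unfolding enumerates_def prefix_def by auto

lemma A_bound:
  assumes "c \<ge> 101 \<or> (i \<le> w \<and> w \<ge> 101)"
  shows "gen_bound (\<lambda>p. Aset w (set p)) ({1..100} \<union> {i..}) c"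
  unfolding gen_bound_def
proof (intro allI impI)
  fix x t assume e: "enumerates x ({1..100} \<union> {i..})" and "t \<ge> 1" and ct: "card (set (prefix x t)) \<ge> c"
  show "Aset w (set (prefix x t)) \<in> ({1..100} \<union> {i..}) - set (prefix x t)"
    by (rule Aset_ok[OF _ prefix_sub[OF e]]) (use assms ct in auto)
qed

lemma bad_enum:
  assumes "{1..100} \<subseteq> L" and "L \<noteq> {}" and "countable L"
  shows "\<exists>x. enumerates x L \<and> prefix x 100 = map (\<lambda>k. int k + 1) [0..<100]"
proof -
  define x where "x k = (if k < 100 then int k + 1 else from_nat_into L (k - 100))" for k
  have "range x = L"
  proof
    show "range x \<subseteq> L"
    proof
      fix y assume "y \<in> range x"
      then obtain k where k: "y = x k" by blast
      show "y \<in> L"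
      proof (cases "k < 100")
        case True
        hence "y \<in> {1..100}" unfolding k x_def by simp
        thus ?thesis using assms(1) by blast
      next
        case False
        hence "y = from_nat_into L (k - 100)" unfolding k x_def by simp
        thus ?thesis using from_nat_into[OF assms(2)] by simp
      qed
    qed
    show "L \<subseteq> range x"
    proof
      fix y assume "y \<in> L"
      then obtain n where "from_nat_into L n = y" using range_from_nat_into[OF assms(2,3)] by (metis imageE)
      hence "x (n + 100) = y" by (simp add: x_def)
      thus "y \<in> range x" by (metis range_eqI)
    qed
  qed
  moreover have "prefix x 100 = map (\<lambda>k. int k + 1) [0..<100]"
    unfolding prefix_def by (rule map_cong) (simp_all add: x_def)
  ultimately show ?thesis unfolding enumerates_def by (intro exI conjI)
qed

lemma setP: "set (map (\<lambda>k. int k + 1) [0..<100]) = {1..100}"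
proof -
  have "set (map (\<lambda>k. int k + 1) [0..<100]) = (\<lambda>k. int k + 1) ` {0..<100}" by simp
  also have "\<dots> = {1..100}"
  proof
    show "{1..100} \<subseteq> (\<lambda>k. int k + 1) ` {0..<100}"
    proof
      fix y :: int assume "y \<in> {1..100}"
      hence "y = int (nat (y - 1)) + 1" "nat (y - 1) \<in> {0..<100}" by auto
      thus "y \<in> (\<lambda>k. int k + 1) ` {0..<100}" by blast
    qed
  qed auto
  finally show ?thesis .
qed

lemma G_bad:
  fixes G :: "int list \<Rightarrow> int"
  assumes "G (map (\<lambda>k. int k + 1) [0..<100]) \<notin> ({1..100} \<union> {i..}) - {1..100}"
  shows "gen_time G ({1..100} \<union> {i..}) \<ge> enat 101"
proof (rule gen_time_ge)
  fix n :: nat assume n: "n < 101"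
  let ?L = "{1..100} \<union> {i..} :: int set"
  obtain x where x: "enumerates x ?L" "prefix x 100 = map (\<lambda>k. int k + 1) [0..<100]"
    using bad_enum[of ?L] by auto
  have c: "card (set (prefix x 100)) = 100" using x(2) setP by simp
  show "\<not> gen_bound G ?L n"
  proof
    assume "gen_bound G ?L n"
    hence "G (prefix x 100) \<in> ?L - set (prefix x 100)"
      unfolding gen_bound_def using x(1) c n by auto
    thus False using assms x(2) setP by simp
  qed
qed

theorem mainTheorem5:
  shows "\<not> (\<exists>G :: int list \<Rightarrow> int. nonuniform_generates C5 G \<and> pareto_optimal C5 (gen_time G))"
proof
  assume "\<exists>G :: int list \<Rightarrow> int. nonuniform_generates C5 G \<and> pareto_optimal C5 (gen_time G)"
  then obtain G :: "int list \<Rightarrow> int" where po: "pareto_optimal C5 (gen_time G)" by blast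
  define z where "z = G (map (\<lambda>k. int k + 1) [0..<100])"
  define w where "w = max z 101 + 1"
  define A where "A = (\<lambda>p. Aset w (set p))"
  have ng: "nonuniform_generates C5 A"
    unfolding nonuniform_generates_def C5_def
  proof
    fix L assume "L \<in> range (\<lambda>i::int. {1..100} \<union> {i..})"
    then obtain i where L: "L = {1..100} \<union> {i..}" by auto
    have "gen_time A L \<le> enat 101" unfolding A_def L by (rule gen_time_le, rule A_bound) simp
    thus "gen_time A L \<noteq> \<infinity>" by (cases "gen_time A L") auto
  qed
  have le: "gen_time A L \<le> gen_time G L" if "L \<in> C5" for L
  proof -
    obtain i where L: "L = {1..100} \<union> {i..}" using \<open>L \<in> C5\<close> unfolding C5_def by blast
    show ?thesis
    proof (cases "z \<in> L - {1..100}")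
      case True
      hence "i \<le> w" unfolding L w_def by auto
      hence "gen_time A L \<le> enat 0" unfolding A_def L
        by (intro gen_time_le A_bound) (auto simp: w_def)
      thus ?thesis by (simp add: zero_enat_def[symmetric])
    next
      case False
      hence "gen_time G L \<ge> enat 101" unfolding L by (intro G_bad) (simp add: z_def[symmetric])
      moreover have "gen_time A L \<le> enat 101" unfolding A_def L by (rule gen_time_le, rule A_bound) simp
      ultimately show ?thesis by (meson order_trans)
    qed
  qed
  let ?Lw = "{1..100} \<union> {w..} :: int set"
  have Lw: "?Lw \<in> C5" unfolding C5_def by blast
  have "gen_time A ?Lw \<le> enat 0" unfolding A_def
    by (intro gen_time_le A_bound) (auto simp: w_def)
  moreover have "gen_time G ?Lw \<ge> enat 101"
    by (intro G_bad) (auto simp: z_def[symmetric] w_def)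
  ultimately have "gen_time A ?Lw < gen_time G ?Lw"
    by (metis enat_ord_simps(2) le_less_trans order.strict_trans2 zero_less_numeral)
  hence "\<exists>L'\<in>C5. gen_time A L' > gen_time G L'"
    using po ng Lw unfolding pareto_optimal_def by blast
  thus False using le by (meson not_le)
qed

end
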